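(* Let $X$ be a real reflexive Banach space and let $\Omega_1,\Omega_2\subset X$ be closed convex sets such that $\operatorname{int}(\Omega_1-\Omega_2)\neq\emptyset$ and $0\in\operatorname{core}(\Omega_1-\Omega_2)$. Then for every $\bar x\in\Omega_1\cap\Omega_2$ there exists a bounded convex neighborhood $V$ of $\bar x$ such that $0\in\operatorname{int}\big(\Omega_1-(\Omega_2\cap V)\big)$.
   Context: For sets $A,B$, $A-B=\{a-b\mid a\in A,b\in B\}$; $\operatorname{int}$ is the topological interior. The (algebraic) core of a set $\Omega\subset X$ is $\operatorname{core}\Omega=\{x\in\Omega\mid \forall v\in X\ \exists\gamma>0 \text{ such that } x+tv\in\Omega \text{ whenever } |t|<\gamma\}$. *)

theory Defs
  imports "HOL-Analysis.Analysis"
begin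

definition set_diff_mink :: "'a::ab_group_add set \<Rightarrow> 'a set \<Rightarrow> 'a set" where
  "set_diff_mink A B = {a - b | a b. a \<in> A \<and> b \<in> B}"

definition core :: "'a::real_vector set \<Rightarrow> 'a set" where
  "core \<Omega> = {x \<in> \<Omega>. \<forall>v. \<exists>\<gamma>>0. \<forall>t::real. \<bar>t\<bar> < \<gamma> \<longrightarrow> x + t *\<^sub>R v \<in> \<Omega>}"

text \<open>Reflexivity: the canonical embedding of X into its bidual is surjective,
  i.e. every continuous linear functional on the dual X* is evaluation at some x.\<close>
definition reflexive_space :: "'a::real_normed_vector itself \<Rightarrow> bool" where
  "reflexive_space _ \<longleftrightarrow>
     (\<forall>\<phi> :: ('a \<Rightarrow>\<^sub>L real) \<Rightarrow>\<^sub>L real. \<exists>x::'a. \<forall>f. blinfun_apply \<phi> f = blinfun_apply f x)"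

end

theory Submission
  imports Defs
begin

lemma convex_subsum:
  fixes C :: "'a::real_vector set"
  assumes "convex C" "0 \<in> C" "finite I" "\<And>i. w i \<ge> 0" "sum w I \<le> 1" "\<And>i. i \<in> I \<Longrightarrow> x i \<in> C"
  shows "(\<Sum>i\<in>I. w i *\<^sub>R x i) \<in> C"
proof (cases "sum w I = 0")
  case True
  then have "\<forall>i\<in>I. w i = 0" using sum_nonneg_eq_0_iff[OF assms(3)] assms(4) by blast
  then show ?thesis using assms(2) by simp
next
  case False
  define s where "s = sum w I"
  have s0: "s > 0" using False assms(4) sum_nonneg[of I w] unfolding s_def by (simp add: order_less_le)
  have c: "(\<Sum>i\<in>I. (w i / s) *\<^sub>R x i) \<in> C"
    apply (rule convex_sum[OF assms(3,1)])
    using s0 assms(4,6) by (auto simp: sum_divide_distrib[symmetric] s_def)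
  have "s *\<^sub>R (\<Sum>i\<in>I. (w i / s) *\<^sub>R x i) + (1 - s) *\<^sub>R 0 \<in> C"
    using convexD[OF assms(1) c assms(2), of s "1-s"] s0 assms(5) s_def by simp
  moreover have "s *\<^sub>R (\<Sum>i\<in>I. (w i / s) *\<^sub>R x i) = (\<Sum>i\<in>I. w i *\<^sub>R x i)"
    using s0 by (simp add: scaleR_sum_right)
  ultimately show ?thesis by simp
qed

lemma geom_half_sum: "(\<Sum>k<N. (1/2::real)^Suc k) = 1 - (1/2)^N"
  by (induction N) (auto simp: field_simps)

lemma core_iter:
  fixes A B :: "'a::banach set"
  assumes cA: "closed A" and cB: "closed B" and vA: "convex A" and vB: "convex B"
    and A0: "0 \<in> A" and B0: "0 \<in> B" and Ab: "A \<subseteq> cball 0 1" and Bb: "B \<subseteq> cball 0 1"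
    and d: "\<delta> > 0" and cl: "ball 0 \<delta> \<subseteq> closure (set_diff_mink A B)"
  shows "ball 0 (\<delta>/2) \<subseteq> set_diff_mink A B"
proof
  fix y :: 'a assume y: "y \<in> ball 0 (\<delta>/2)"
  have approx: "\<exists>p. fst p \<in> A \<and> snd p \<in> B \<and> norm (z - (1/2)^n *\<^sub>R (fst p - snd p)) < \<delta> * (1/2)^Suc n"
    if z: "norm z < \<delta> * (1/2)^n" for n z
  proof -
    have "(2^n) *\<^sub>R z \<in> ball 0 \<delta>"
      using z by (simp add: power_divide field_simps)
    then have "(2^n) *\<^sub>R z \<in> closure (set_diff_mink A B)" using cl by blast
    then obtain k where k: "k \<in> set_diff_mink A B" "dist k ((2^n) *\<^sub>R z) < \<delta> / 2"
      using closure_approachable d by (metis half_gt_zero)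
    then obtain a b where ab: "a \<in> A" "b \<in> B" "k = a - b" unfolding set_diff_mink_def by blast
    have "z - (1/2)^n *\<^sub>R (a - b) = (1/2)^n *\<^sub>R ((2^n) *\<^sub>R z - k)"
      using ab by (simp add: power_divide scaleR_diff_right)
    then have "norm (z - (1/2)^n *\<^sub>R (a - b)) = (1/2)^n * dist k ((2^n) *\<^sub>R z)"
      by (simp add: dist_norm norm_minus_commute)
    also have "\<dots> < (1/2)^n * (\<delta>/2)"
      using k(2) by (intro mult_strict_left_mono) auto
    finally show ?thesis using ab by (intro exI[of _ "(a,b)"]) (simp add: field_simps)
  qed
  then obtain f where f: "\<And>n z. norm z < \<delta> * (1/2)^n \<Longrightarrow> fst (f n z) \<in> A \<and> snd (f n z) \<in> B \<and>
      norm (z - (1/2)^n *\<^sub>R (fst (f n z) - snd (f n z))) < \<delta> * (1/2)^Suc n"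
  proof -
    have ex: "\<forall>n. \<exists>g. \<forall>z. norm z < \<delta> * (1/2)^n \<longrightarrow> (fst (g z) \<in> A \<and> snd (g z) \<in> B \<and>
      norm (z - (1/2)^n *\<^sub>R (fst (g z) - snd (g z))) < \<delta> * (1/2)^Suc n)"
    proof
      fix n show "\<exists>g. \<forall>z. norm z < \<delta> * (1/2)^n \<longrightarrow> (fst (g z) \<in> A \<and> snd (g z) \<in> B \<and>
      norm (z - (1/2)^n *\<^sub>R (fst (g z) - snd (g z))) < \<delta> * (1/2)^Suc n)"
        apply (rule choice) using approx by blast
    qed
    from choice[OF ex] obtain f where "\<forall>n z. norm z < \<delta> * (1/2)^n \<longrightarrow> (fst (f n z) \<in> A \<and> snd (f n z) \<in> B \<and>
      norm (z - (1/2)^n *\<^sub>R (fst (f n z) - snd (f n z))) < \<delta> * (1/2)^Suc n)" by blast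
    then show ?thesis using that by blast
  qed
  define z where "z = 2 *\<^sub>R y"
  have nz: "norm z < \<delta>" using y by (simp add: z_def)
  define r where "r = rec_nat z (\<lambda>n w. w - (1/2)^n *\<^sub>R (fst (f n w) - snd (f n w)))"
  have r0: "r 0 = z" and rS: "\<And>n. r (Suc n) = r n - (1/2)^n *\<^sub>R (fst (f n (r n)) - snd (f n (r n)))"
    by (simp_all add: r_def)
  define a where "a n = fst (f n (r n))" for n
  define b where "b n = snd (f n (r n))" for n
  have rb: "norm (r n) < \<delta> * (1/2)^n" for n
  proof (induction n)
    case 0 then show ?case using nz r0 by simp
  next
    case (Suc n) then show ?case using f[OF Suc] rS[of n] by simp
  qed
  have aA: "a n \<in> A" and bB: "b n \<in> B" for n using f[OF rb[of n]] by (simp_all add: a_def b_def)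
  have rsum: "r n = z - (\<Sum>k<n. (1/2)^k *\<^sub>R (a k - b k))" for n
    by (induction n) (simp_all add: r0 rS a_def b_def)
  have r_lim: "r \<longlonglongrightarrow> 0"
  proof -
    have g: "(\<lambda>n. \<delta> * (1/2::real)^n) \<longlonglongrightarrow> 0"
      by (intro tendsto_mult_right_zero LIMSEQ_power_zero) simp
    have ev: "\<forall>\<^sub>F n in sequentially. norm (r n) \<le> \<delta> * (1/2::real)^n"
      by (intro always_eventually allI less_imp_le rb)
    show ?thesis by (rule Lim_null_comparison[OF ev g])
  qed
  have na: "norm ((1/2::real)^k *\<^sub>R a k) \<le> (1/2)^k" for k
    using aA[of k] Ab by (auto simp: mult_left_le)
  have nb: "norm ((1/2::real)^k *\<^sub>R b k) \<le> (1/2)^k" for k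
    using bB[of k] Bb by (auto simp: mult_left_le)
  have sa: "summable (\<lambda>k. (1/2::real)^k *\<^sub>R a k)"
    by (rule summable_comparison_test[of _ "\<lambda>k. (1/2::real)^k"]) (use na in auto)
  have sb: "summable (\<lambda>k. (1/2::real)^k *\<^sub>R b k)"
    by (rule summable_comparison_test[of _ "\<lambda>k. (1/2::real)^k"]) (use nb in auto)
  have "(\<lambda>n. \<Sum>k<n. (1/2::real)^k *\<^sub>R (a k - b k)) \<longlonglongrightarrow> z"
  proof -
    have "(\<lambda>n. z - r n) \<longlonglongrightarrow> z - 0" by (intro tendsto_diff tendsto_const r_lim)
    then show ?thesis by (simp add: rsum)
  qed
  then have "(\<lambda>k. (1/2::real)^k *\<^sub>R (a k - b k)) sums z" by (simp add: sums_def)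
  moreover have "(\<lambda>k. (1/2::real)^k *\<^sub>R (a k - b k)) sums
     (suminf (\<lambda>k. (1/2::real)^k *\<^sub>R a k) - suminf (\<lambda>k. (1/2::real)^k *\<^sub>R b k))"
    using sums_diff[OF summable_sums[OF sa] summable_sums[OF sb]] by (simp add: scaleR_diff_right)
  ultimately have zeq: "z = suminf (\<lambda>k. (1/2::real)^k *\<^sub>R a k) - suminf (\<lambda>k. (1/2::real)^k *\<^sub>R b k)"
    using sums_unique2 by blast
  have half_in: "(1/2::real) *\<^sub>R suminf (\<lambda>k. (1/2::real)^k *\<^sub>R c k) \<in> C"
    if cC: "\<And>k. c k \<in> C" and cvx: "convex C" and cl: "closed C" and C0: "0 \<in> C"
      and sc: "summable (\<lambda>k. (1/2::real)^k *\<^sub>R c k)" for c :: "nat \<Rightarrow> 'a" and C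
  proof -
    have "(\<lambda>k. (1/2::real) *\<^sub>R ((1/2::real)^k *\<^sub>R c k)) sums ((1/2::real) *\<^sub>R suminf (\<lambda>k. (1/2::real)^k *\<^sub>R c k))"
      by (rule sums_scaleR_right[OF summable_sums[OF sc]])
    then have lim: "(\<lambda>n. \<Sum>k<n. (1/2::real)^Suc k *\<^sub>R c k) \<longlonglongrightarrow> (1/2::real) *\<^sub>R suminf (\<lambda>k. (1/2::real)^k *\<^sub>R c k)"
      by (simp add: sums_def)
    have "(\<Sum>k<n. (1/2::real)^Suc k *\<^sub>R c k) \<in> C" for n
      apply (rule convex_subsum[OF cvx C0]) apply (auto simp: cC) using geom_half_sum[of n] by simp
    then show ?thesis using closed_sequentially[OF cl _ lim] by blast
  qed
  have "y = (1/2::real) *\<^sub>R suminf (\<lambda>k. (1/2::real)^k *\<^sub>R a k) - (1/2::real) *\<^sub>R suminf (\<lambda>k. (1/2::real)^k *\<^sub>R b k)"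
    proof - have "y = (1/2::real) *\<^sub>R z" by (simp add: z_def) then show ?thesis using zeq by (simp add: scaleR_diff_right) qed
  then show "y \<in> set_diff_mink A B"
    unfolding set_diff_mink_def
    using half_in[OF aA vA cA A0 sa] half_in[OF bB vB cB B0 sb] by blast
qed


lemma baire_banach:
  fixes F :: "nat \<Rightarrow> 'a::banach set"
  assumes "\<And>n. closed (F n)" "(\<Union>n. F n) = UNIV"
  shows "\<exists>n. interior (F n) \<noteq> {}"
proof (rule ccontr)
  assume "\<not> ?thesis"
  then have "euclidean interior_of \<Union>(range F) = {}"
    apply (intro Baire_category_alt)
    using assms completely_metrizable_space_euclidean 
    by (auto simp: interior_of_def interior_def)
  then show False using assms(2) open_UNIV by (simp add: interior_of_def) blast
qed

lemma convex_mink: "convex S \<Longrightarrow> convex T \<Longrightarrow> convex (set_diff_mink S T)"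
proof -
  assume "convex S" "convex T"
  moreover have "set_diff_mink S T = (\<Union>x\<in> S. \<Union>y \<in> T. {x - y})" unfolding set_diff_mink_def by auto
  ultimately show ?thesis using convex_differences by metis
qed

theorem proposition3p3:
  fixes \<Omega>1 \<Omega>2 :: "'a::banach set"
  assumes "reflexive_space TYPE('a)"
    and "closed \<Omega>1" and "convex \<Omega>1" and "closed \<Omega>2" and "convex \<Omega>2"
    and "interior (set_diff_mink \<Omega>1 \<Omega>2) \<noteq> {}"
    and "0 \<in> core (set_diff_mink \<Omega>1 \<Omega>2)"
  shows "\<forall>xbar \<in> \<Omega>1 \<inter> \<Omega>2. \<exists>V. bounded V \<and> convex V \<and> xbar \<in> interior V \<and>
           0 \<in> interior (set_diff_mink \<Omega>1 (\<Omega>2 \<inter> V))"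
proof
  fix xbar assume xb: "xbar \<in> \<Omega>1 \<inter> \<Omega>2"
  define V where "V = cball xbar 1"
  define A where "A = (\<lambda>x. x - xbar) ` (\<Omega>1 \<inter> V)"
  define B where "B = (\<lambda>x. x - xbar) ` (\<Omega>2 \<inter> V)"
  define K where "K = set_diff_mink A B"
  have cA: "closed A" unfolding A_def V_def
    by (intro closed_translation_subtract closed_Int assms closed_cball)
  have cB: "closed B" unfolding B_def V_def
    by (intro closed_translation_subtract closed_Int assms closed_cball)
  have vA: "convex A" unfolding A_def V_def
    by (intro convex_translation_subtract convex_Int assms convex_cball)
  have vB: "convex B" unfolding B_def V_def
    by (intro convex_translation_subtract convex_Int assms convex_cball)
  have A0: "0 \<in> A" using xb unfolding A_def V_def by force
  have B0: "0 \<in> B" using xb unfolding B_def V_def by force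
  have Ab: "A \<subseteq> cball 0 1" unfolding A_def V_def by (auto simp: dist_norm norm_minus_commute)
  have Bb: "B \<subseteq> cball 0 1" unfolding B_def V_def by (auto simp: dist_norm norm_minus_commute)
  have vK: "convex K" unfolding K_def by (intro convex_mink vA vB)
  have K0: "0 \<in> K" unfolding K_def set_diff_mink_def using A0 B0 by force
  have Ksub: "K \<subseteq> set_diff_mink \<Omega>1 (\<Omega>2 \<inter> V)"
    unfolding K_def A_def B_def set_diff_mink_def V_def by fastforce
  have shrinkA: "\<exists>l>0. \<forall>s. 0 < s \<and> s \<le> l \<longrightarrow> s *\<^sub>R (a - xbar) \<in> (\<lambda>x. x - xbar) ` (\<Omega> \<inter> V)"
    if a: "a \<in> \<Omega>" and cv: "convex \<Omega>" and x\<Omega>: "xbar \<in> \<Omega>" for a \<Omega>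
  proof (intro exI[of _ "1 / (1 + norm (a - xbar))"] conjI allI impI)
    show "0 < 1 / (1 + norm (a - xbar))" by (simp add: add_pos_nonneg)
    fix s assume s: "0 < s \<and> s \<le> 1 / (1 + norm (a - xbar))"
    have s1: "s \<le> 1" using s by (smt (verit, ccfv_SIG) divide_le_eq_1 norm_ge_zero)
    have sn: "s * norm (a - xbar) \<le> 1"
    proof -
      have "s * (1 + norm (a - xbar)) \<le> 1" using s by (simp add: le_divide_eq add_pos_nonneg mult.commute)
      then show ?thesis by (simp add: distrib_left) (smt (verit) s)
    qed
    have "(1 - s) *\<^sub>R xbar + s *\<^sub>R a \<in> \<Omega>" using convexD[OF cv x\<Omega> a, of "1-s" s] s s1 by simp
    moreover have "(1 - s) *\<^sub>R xbar + s *\<^sub>R a = xbar + s *\<^sub>R (a - xbar)" by (simp add: algebra_simps)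
    moreover have "dist xbar (xbar + s *\<^sub>R (a - xbar)) \<le> 1" using s sn by (simp add: dist_norm)
    ultimately show "s *\<^sub>R (a - xbar) \<in> (\<lambda>x. x - xbar) ` (\<Omega> \<inter> V)"
      unfolding V_def by (intro image_eqI[of _ _ "xbar + s *\<^sub>R (a - xbar)"]) auto
  qed
  have absorb: "\<exists>t>0. t *\<^sub>R v \<in> K" for v
  proof -
    obtain \<gamma> where g: "\<gamma> > 0" "\<And>t. \<bar>t\<bar> < \<gamma> \<Longrightarrow> 0 + t *\<^sub>R v \<in> set_diff_mink \<Omega>1 \<Omega>2"
      using assms(7) unfolding core_def by blast
    have "(\<gamma>/2) *\<^sub>R v \<in> set_diff_mink \<Omega>1 \<Omega>2" using g(2)[of "\<gamma>/2"] g(1) by simp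
    then obtain a b where ab: "a \<in> \<Omega>1" "b \<in> \<Omega>2" "(\<gamma>/2) *\<^sub>R v = a - b" unfolding set_diff_mink_def by blast
    obtain l1 where l1: "l1 > 0" "\<And>s. 0 < s \<and> s \<le> l1 \<Longrightarrow> s *\<^sub>R (a - xbar) \<in> A"
      using shrinkA[OF ab(1) assms(3)] xb unfolding A_def by blast
    obtain l2 where l2: "l2 > 0" "\<And>s. 0 < s \<and> s \<le> l2 \<Longrightarrow> s *\<^sub>R (b - xbar) \<in> B"
      using shrinkA[OF ab(2) assms(5)] xb unfolding B_def by blast
    define s where "s = min l1 l2"
    have s: "0 < s" "s \<le> l1" "s \<le> l2" using l1 l2 by (auto simp: s_def)
    have "s *\<^sub>R (a - xbar) - s *\<^sub>R (b - xbar) \<in> K"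
      unfolding K_def set_diff_mink_def using l1(2) l2(2) s by blast
    moreover have "s *\<^sub>R (a - xbar) - s *\<^sub>R (b - xbar) = (s * (\<gamma>/2)) *\<^sub>R v"
      proof - have "s *\<^sub>R (a - xbar) - s *\<^sub>R (b - xbar) = s *\<^sub>R (a - b)" by (simp add: algebra_simps) then show ?thesis by (simp add: ab(3)[symmetric]) qed
    ultimately show ?thesis using s g(1) by (intro exI[of _ "s * (\<gamma>/2)"]) auto
  qed
  have scaleK: "s *\<^sub>R k \<in> K" if "k \<in> K" "0 \<le> s" "s \<le> 1" for s k
    using convexD[OF vK that(1) K0, of s "1-s"] that by simp
  define F where "F n = (\<lambda>x. real (Suc n) *\<^sub>R x) ` closure K" for n
  have "\<exists>n. interior (F n) \<noteq> {}"
  proof (rule baire_banach)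
    show "closed (F n)" for n unfolding F_def by (intro closed_scaling closed_closure)
    show "(\<Union>n. F n) = UNIV"
    proof (rule set_eqI, rule iffI)
      fix v :: 'a
      obtain t where t: "t > 0" "t *\<^sub>R v \<in> K" using absorb by blast
      obtain m where m: "1 / t < real m" using reals_Archimedean2 by blast
      obtain n where n: "1 / t < real (Suc n)" using m by (intro that[of m]) simp
      define c where "c = real (Suc n)"
      have c: "c > 0" "1/t < c" using n by (auto simp: c_def)
      have tc: "1 / (t * c) \<le> 1" using c t by (simp add: field_simps)
      have "(1 / (t * c)) *\<^sub>R (t *\<^sub>R v) \<in> K" using scaleK[OF t(2), of "1 / (t * c)"] tc c t by simp
      moreover have "v = c *\<^sub>R ((1 / (t * c)) *\<^sub>R (t *\<^sub>R v))" using c t by simp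
      ultimately have "v \<in> F n" unfolding F_def c_def using closure_subset by blast
      then show "v \<in> (\<Union>n. F n)" by blast
    qed simp
  qed
  then obtain n where "interior (F n) \<noteq> {}" by blast
  then obtain u r where ur: "r > 0" "ball u r \<subseteq> F n"
    by (metis all_not_in_conv mem_interior)
  define c where "c = real (Suc n)"
  have c0: "c > 0" by (simp add: c_def)
  define p where "p = (1/c) *\<^sub>R u"
  define \<rho> where "\<rho> = r / c"
  have \<rho>0: "\<rho> > 0" using ur c0 by (simp add: \<rho>_def)
  have ballp: "ball p \<rho> \<subseteq> closure K"
  proof
    fix w assume w: "w \<in> ball p \<rho>"
    have "dist u (c *\<^sub>R w) = c * dist p w"
    proof -
      have "u - c *\<^sub>R w = c *\<^sub>R (p - w)" using c0 by (simp add: p_def algebra_simps)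
      then show ?thesis using c0 by (simp add: dist_norm)
    qed
    then have "c *\<^sub>R w \<in> ball u r" using w c0 by (simp add: \<rho>_def field_simps)
    then have "c *\<^sub>R w \<in> (\<lambda>x. c *\<^sub>R x) ` closure K" using ur unfolding F_def c_def by blast
    then obtain k where "k \<in> closure K" "c *\<^sub>R w = c *\<^sub>R k" by blast
    then show "w \<in> closure K" using c0 by simp
  qed
  obtain t where t: "t > 0" "t *\<^sub>R (- p) \<in> K" using absorb by blast
  define \<theta> where "\<theta> = t / (1 + t)"
  have th: "0 < \<theta>" "\<theta> < 1" using t by (auto simp: \<theta>_def)
  define \<delta> where "\<delta> = \<rho> * \<theta>"
  have d0: "\<delta> > 0" using th \<rho>0 by (simp add: \<delta>_def)
  have ball0: "ball 0 \<delta> \<subseteq> closure K"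
  proof
    fix w :: 'a assume w: "w \<in> ball 0 \<delta>"
    have "p + (1/\<theta>) *\<^sub>R w \<in> ball p \<rho>"
      using w th by (simp add: dist_norm \<delta>_def field_simps)
    then have q: "p + (1/\<theta>) *\<^sub>R w \<in> closure K" using ballp by blast
    have m: "t *\<^sub>R (- p) \<in> closure K" using t closure_subset by blast
    have "(1 - \<theta>) *\<^sub>R (t *\<^sub>R (- p)) + \<theta> *\<^sub>R (p + (1/\<theta>) *\<^sub>R w) \<in> closure K"
      using convexD[OF convex_closure[OF vK] m q, of "1 - \<theta>" \<theta>] th by simp
    moreover have "(1 - \<theta>) *\<^sub>R (t *\<^sub>R (- p)) + \<theta> *\<^sub>R (p + (1/\<theta>) *\<^sub>R w) = w"
    proof -
      have "(1 - \<theta>) * t = \<theta>" using t by (simp add: \<theta>_def field_simps)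
      then have "(1 - \<theta>) *\<^sub>R (t *\<^sub>R (- p)) = - (\<theta> *\<^sub>R p)" by (simp add: scaleR_scaleR)
      then show ?thesis using th by (simp add: algebra_simps)
    qed
    ultimately show "w \<in> closure K" by simp
  qed
  have "ball 0 (\<delta>/2) \<subseteq> K"
    using core_iter[OF cA cB vA vB A0 B0 Ab Bb d0] ball0 unfolding K_def by blast
  then have "0 \<in> interior K" using d0 by (meson centre_in_ball half_gt_zero interior_maximal open_ball subsetD)
  then have "0 \<in> interior (set_diff_mink \<Omega>1 (\<Omega>2 \<inter> V))" using interior_mono[OF Ksub] by blast
  moreover have "bounded V" "convex V" by (simp_all add: V_def)
  moreover have "xbar \<in> interior V" unfolding V_def by (meson ball_subset_cball centre_in_ball interior_maximal open_ball subsetD zero_less_one)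
  ultimately show "\<exists>V. bounded V \<and> convex V \<and> xbar \<in> interior V \<and>
           0 \<in> interior (set_diff_mink \<Omega>1 (\<Omega>2 \<inter> V))" by blast
qed

end
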